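(* For all integers $t\ge0$, $\mathcal K(t)\ge0$.
   Context: Given $n$, nonnegative numbers $\sigma_1^2,\dots,\sigma_n^2$, $\gamma>0$, $\zeta\in(0,1]$, $\Delta\in[0,1)$. For $j\in[n]$: $\Omega_j=1-\gamma\zeta\sigma_j^2+\Delta$, $\lambda_{2,j},\lambda_{3,j}=\frac{-2\Delta+\Omega_j^2\pm\sqrt{\Omega_j^2(\Omega_j^2-4\Delta)}}{2}$ (complex square root if the argument is negative). $\mathcal K(t)=\gamma^2\zeta(1-\zeta)H_2(t)$ with $H_2(t)=\frac1n\sum_{j=1}^n\frac{2\sigma_j^4}{\Omega_j^2-4\Delta}\big(-\Delta^{t+1}+\frac12\lambda_{2,j}^{t+1}+\frac12\lambda_{3,j}^{t+1}\big)$ (terms with $\Omega_j^2=4\Delta$ understood by continuity). *)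

theory Defs
  imports "HOL-Analysis.Analysis"
begin

definition Omega :: "real \<Rightarrow> real \<Rightarrow> real \<Rightarrow> real \<Rightarrow> real" where
  "Omega \<gamma> \<zeta> \<Delta> s2 = 1 - \<gamma> * \<zeta> * s2 + \<Delta>"

text \<open>lambda_2, lambda_3 (complex square root of a possibly negative real).\<close>
definition lam2 :: "real \<Rightarrow> real \<Rightarrow> complex" where
  "lam2 \<Delta> \<Omega> = (complex_of_real (-2*\<Delta> + \<Omega>^2)
      + csqrt (complex_of_real (\<Omega>^2 * (\<Omega>^2 - 4*\<Delta>)))) / 2"

definition lam3 :: "real \<Rightarrow> real \<Rightarrow> complex" where
  "lam3 \<Delta> \<Omega> = (complex_of_real (-2*\<Delta> + \<Omega>^2)
      - csqrt (complex_of_real (\<Omega>^2 * (\<Omega>^2 - 4*\<Delta>)))) / 2"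

text \<open>The raw summand of H_2 as a function of Omega (s2 = sigma_j^2, so sigma_j^4 = s2^2).\<close>
definition Hraw :: "real \<Rightarrow> real \<Rightarrow> nat \<Rightarrow> real \<Rightarrow> complex" where
  "Hraw s2 \<Delta> t \<Omega> = complex_of_real (2 * s2^2 / (\<Omega>^2 - 4*\<Delta>)) *
     (- ((complex_of_real \<Delta>) ^ (t+1)) + (lam2 \<Delta> \<Omega>) ^ (t+1) / 2 + (lam3 \<Delta> \<Omega>) ^ (t+1) / 2)"

text \<open>Summand extended by continuity (in Omega) where Omega^2 = 4 Delta.\<close>
definition Hterm :: "real \<Rightarrow> real \<Rightarrow> nat \<Rightarrow> real \<Rightarrow> complex" where
  "Hterm s2 \<Delta> t \<Omega> = (if \<Omega>^2 = 4*\<Delta> then Lim (at \<Omega>) (Hraw s2 \<Delta> t) else Hraw s2 \<Delta> t \<Omega>)"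

text \<open>H_2(t); sigma2 j = sigma_j^2 for j = 1..n. The value is real; we take the real part.\<close>
definition H2 :: "nat \<Rightarrow> (nat \<Rightarrow> real) \<Rightarrow> real \<Rightarrow> real \<Rightarrow> real \<Rightarrow> nat \<Rightarrow> real" where
  "H2 n sigma2 \<gamma> \<zeta> \<Delta> t =
     (1 / real n) * (\<Sum>j=1..n. Re (Hterm (sigma2 j) \<Delta> t (Omega \<gamma> \<zeta> \<Delta> (sigma2 j))))"

definition KK :: "nat \<Rightarrow> (nat \<Rightarrow> real) \<Rightarrow> real \<Rightarrow> real \<Rightarrow> real \<Rightarrow> nat \<Rightarrow> real" where
  "KK n sigma2 \<gamma> \<zeta> \<Delta> t = \<gamma>^2 * \<zeta> * (1 - \<zeta>) * H2 n sigma2 \<gamma> \<zeta> \<Delta> t"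

end

theory Submission
  imports Defs
begin

fun UU :: "nat \<Rightarrow> real \<Rightarrow> real \<Rightarrow> real" where
  "UU 0 W D = 0"
| "UU (Suc 0) W D = 1"
| "UU (Suc (Suc k)) W D = W * UU (Suc k) W D - D * UU k W D"

lemma UU_cont2: "continuous_on UNIV (\<lambda>x. UU k x D) \<and> continuous_on UNIV (\<lambda>x. UU (Suc k) x D)"
proof (induction k)
  case (Suc k)
  then show ?case by (auto intro!: continuous_intros)
qed (auto intro!: continuous_intros)

lemma UU_cont: "continuous_on UNIV (\<lambda>x. UU k x D)"
  using UU_cont2 by blast

lemma UU_diff2:
  fixes \<mu> \<nu> :: complex
  assumes "\<mu> + \<nu> = of_real W" "\<mu> * \<nu> = of_real D"
  shows "\<mu> ^ k - \<nu> ^ k = (\<mu> - \<nu>) * of_real (UU k W D) \<and>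
         \<mu> ^ Suc k - \<nu> ^ Suc k = (\<mu> - \<nu>) * of_real (UU (Suc k) W D)"
proof (induction k)
  case (Suc k)
  have "\<mu> ^ Suc (Suc k) - \<nu> ^ Suc (Suc k) =
        (\<mu> + \<nu>) * (\<mu> ^ Suc k - \<nu> ^ Suc k) - (\<mu> * \<nu>) * (\<mu> ^ k - \<nu> ^ k)"
    by (simp add: algebra_simps)
  also have "\<dots> = of_real W * ((\<mu> - \<nu>) * of_real (UU (Suc k) W D)) - of_real D * ((\<mu> - \<nu>) * of_real (UU k W D))"
    using Suc assms by simp
  also have "\<dots> = (\<mu> - \<nu>) * of_real (UU (Suc (Suc k)) W D)"
    by (simp add: algebra_simps)
  finally show ?case using Suc by simp
qed auto

lemma UU_diff:
  fixes \<mu> \<nu> :: complex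
  assumes "\<mu> + \<nu> = of_real W" "\<mu> * \<nu> = of_real D"
  shows "\<mu> ^ k - \<nu> ^ k = (\<mu> - \<nu>) * of_real (UU k W D)"
  using UU_diff2[OF assms] by blast

lemma Hraw_eq:
  assumes "\<Omega>^2 \<noteq> 4*\<Delta>"
  shows "Hraw s2 \<Delta> t \<Omega> = of_real (s2^2 * (UU (t+1) \<Omega> \<Delta>)^2)"
proof -
  define D where "D = \<Omega>^2 - 4*\<Delta>"
  have D0: "D \<noteq> 0" using assms by (simp add: D_def)
  define r where "r = csqrt (of_real D)"
  have r2: "r^2 = of_real D" by (simp add: r_def)
  define \<mu> where "\<mu> = (of_real \<Omega> + r) / 2"
  define \<nu> where "\<nu> = (of_real \<Omega> - r) / 2"
  have s: "\<mu> + \<nu> = of_real \<Omega>" by (simp add: \<mu>_def \<nu>_def field_simps)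
  have p: "\<mu> * \<nu> = of_real \<Delta>"
    by (simp add: \<mu>_def \<nu>_def field_simps power2_eq_square[symmetric] r2 D_def)
  have md: "\<mu> - \<nu> = r" by (simp add: \<mu>_def \<nu>_def field_simps)
  define q where "q = csqrt (complex_of_real (\<Omega>^2 * (\<Omega>^2 - 4*\<Delta>)))"
  have "q^2 = (r * of_real \<Omega>)^2"
    by (simp add: q_def power_mult_distrib r2 D_def)
  hence qq: "q = r * of_real \<Omega> \<or> q = - (r * of_real \<Omega>)" by (simp add: power2_eq_iff)
  have l2: "lam2 \<Delta> \<Omega> = (complex_of_real (-2*\<Delta> + \<Omega>^2) + q) / 2"
    by (simp add: lam2_def q_def)
  have l3: "lam3 \<Delta> \<Omega> = (complex_of_real (-2*\<Delta> + \<Omega>^2) - q) / 2"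
    by (simp add: lam3_def q_def)
  have m2: "\<mu>^2 = (complex_of_real (-2*\<Delta> + \<Omega>^2) + r * of_real \<Omega>) / 2"
    by (simp add: \<mu>_def power2_eq_square field_simps r2[unfolded power2_eq_square] D_def)
  have n2: "\<nu>^2 = (complex_of_real (-2*\<Delta> + \<Omega>^2) - r * of_real \<Omega>) / 2"
    by (simp add: \<nu>_def power2_eq_square field_simps r2[unfolded power2_eq_square] D_def)
  have sumeq: "lam2 \<Delta> \<Omega> ^ (t+1) + lam3 \<Delta> \<Omega> ^ (t+1) = (\<mu>^2)^(t+1) + (\<nu>^2)^(t+1)"
  proof -
    have "(lam2 \<Delta> \<Omega> = \<mu>^2 \<and> lam3 \<Delta> \<Omega> = \<nu>^2) \<or> (lam2 \<Delta> \<Omega> = \<nu>^2 \<and> lam3 \<Delta> \<Omega> = \<mu>^2)"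
      using qq unfolding l2 l3 m2 n2 by auto
    thus ?thesis by (auto simp: add.commute)
  qed
  define k where "k = t + 1"
  have key: "(\<mu>^2)^k + (\<nu>^2)^k - 2 * of_real \<Delta> ^ k = (\<mu>^k - \<nu>^k)^2"
  proof -
    have e1: "(\<mu>^2)^k = (\<mu>^k)^2" "(\<nu>^2)^k = (\<nu>^k)^2"
      by (simp_all add: power_mult[symmetric] mult.commute)
    have e2: "of_real \<Delta> ^ k = \<mu>^k * \<nu>^k"
      by (simp add: p[symmetric] power_mult_distrib)
    show ?thesis unfolding e1 e2 power2_diff by simp
  qed
  have u: "\<mu>^k - \<nu>^k = r * of_real (UU k \<Omega> \<Delta>)" using UU_diff[OF s p] md by simp
  have "Hraw s2 \<Delta> t \<Omega> = of_real (2 * s2^2 / D) * (((\<mu>^2)^k + (\<nu>^2)^k - 2 * of_real \<Delta> ^ k) / 2)"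
    unfolding Hraw_def D_def[symmetric] k_def sumeq[symmetric] by (simp add: field_simps)
  also have "\<dots> = of_real (2 * s2^2 / D) * (of_real D * of_real (UU k \<Omega> \<Delta>)^2 / 2)"
    by (simp add: key u power_mult_distrib r2)
  also have "\<dots> = of_real (s2^2 * (UU k \<Omega> \<Delta>)^2)"
    using D0 by (simp add: field_simps)
  finally show ?thesis by (simp add: k_def)
qed

lemma Hterm_eq:
  "Hterm s2 \<Delta> t \<Omega> = of_real (s2^2 * (UU (t+1) \<Omega> \<Delta>)^2)"
proof (cases "\<Omega>^2 = 4*\<Delta>")
  case False
  then show ?thesis by (simp add: Hterm_def Hraw_eq)
next
  case True
  define g where "g = (\<lambda>x. complex_of_real (s2^2 * (UU (t+1) x \<Delta>)^2))"
  have cg: "continuous_on UNIV g" unfolding g_def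
    by (intro continuous_intros continuous_on_compose2[OF UU_cont]) auto
  hence gl: "(g \<longlongrightarrow> g \<Omega>) (at \<Omega>)"
    by (simp add: continuous_on_def)
  have ev: "eventually (\<lambda>x. Hraw s2 \<Delta> t x = g x) (at \<Omega>)"
  proof -
    define d where "d = (if \<Omega> = 0 then 1 else \<bar>\<Omega>\<bar>)"
    have d: "d > 0" by (simp add: d_def)
    have "\<forall>x. x \<noteq> \<Omega> \<and> dist x \<Omega> < d \<longrightarrow> Hraw s2 \<Delta> t x = g x"
    proof (intro allI impI)
      fix x assume x: "x \<noteq> \<Omega> \<and> dist x \<Omega> < d"
      have "x^2 \<noteq> 4*\<Delta>"
      proof
        assume "x^2 = 4*\<Delta>"
        hence "x^2 = \<Omega>^2" using True by simp
        hence "x = \<Omega> \<or> x = -\<Omega>" by (simp add: power2_eq_iff)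
        thus False using x by (auto simp: d_def dist_real_def split: if_splits)
      qed
      thus "Hraw s2 \<Delta> t x = g x" by (simp add: Hraw_eq g_def)
    qed
    thus ?thesis using d by (auto simp: eventually_at)
  qed
  have "(Hraw s2 \<Delta> t \<longlongrightarrow> g \<Omega>) (at \<Omega>)"
    using gl ev by (simp add: tendsto_cong)
  hence "Lim (at \<Omega>) (Hraw s2 \<Delta> t) = g \<Omega>"
    by (intro tendsto_Lim) auto
  then show ?thesis using True by (simp add: Hterm_def g_def)
qed

theorem lemma5:
  fixes n :: nat and sigma2 :: "nat \<Rightarrow> real" and \<gamma> \<zeta> \<Delta> :: real and t :: nat
  assumes "\<And>j. j \<in> {1..n} \<Longrightarrow> sigma2 j \<ge> 0"
    and "\<gamma> > 0" and "0 < \<zeta>" and "\<zeta> \<le> 1" and "0 \<le> \<Delta>" and "\<Delta> < 1"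
  shows "KK n sigma2 \<gamma> \<zeta> \<Delta> t \<ge> 0"
proof -
  have "H2 n sigma2 \<gamma> \<zeta> \<Delta> t \<ge> 0"
    unfolding H2_def Hterm_eq by (intro mult_nonneg_nonneg sum_nonneg) auto
  thus ?thesis unfolding KK_def using assms by (intro mult_nonneg_nonneg) auto
qed

end
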